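(* Let $\mathcal{C}=\{c_a : a\in\mathcal{A}^*\}$ be a uniform family of quantum circuits (Alice's quantum computer), and let Bob possess a classical simulation scheme for $\mathcal{C}$. Consider the hypothesis testing scenario described in the context. Then Bob's scheme is an $\epsilon$-simulator of $\mathcal{C}$ if and only if, in this hypothesis testing scenario, there exists a strategy for Bob which jointly achieves indistinguishability and efficiency.
   Context: A uniform family of quantum circuits is $\mathcal{C}=\{c_a : a\in\mathcal{A}^*\}$, indexed by finite strings $a$ over a finite alphabet $\mathcal{A}$, with an efficiently computable map from $a$ to the circuit; $c_a$ acts on $n_a$ qubits, its size and description length are bounded by $\mathrm{poly}(n_a)$, and measuring it yields an outcome in $\{0,1\}^{k_a}$ distributed according to the Born-rule distribution $\mathcal{P}_a$. For distributions $\mathcal{P},\mathcal{P}'$ on a finite set, $\|\mathcal{P}-\mathcal{P}'\|_1=\sum_x|\mathcal{P}(x)-\mathcal{P}'(x)|$, and $B(\mathcal{P},\epsilon)$ is the set of distributions within $L_1$ distance $\epsilon$ of $\mathcal{P}$. A classical (randomized) algorithm is an $\epsilon$-simulator of $\mathcal{C}$ if for every $\epsilon>0$ and every $a\in\mathcal{A}^*$ it outputs a sample from some distribution $\mathcal{P}^\epsilon_a\in B(\mathcal{P}_a,\epsilon)$ in run-time $O(\mathrm{poly}(n_a,1/\epsilon))$. Hypothesis testing scenario: one of Alice or Bob is chosen uniformly at random as "the candidate". A referee with unbounded computational power, not knowing the candidate's identity, runs a finite interactive protocol: in each round the referee sends a circuit index $a\in\mathcal{A}^*$ (chosen as a function of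 all previously collected requests and responses), and the candidate returns an outcome; Alice returns a sample from $\mathcal{P}_a$ by running $c_a$, Bob returns the output of his strategy (his response in a round may depend only on the current request and the round number). The referee's rules for choosing requests, for halting, and for deciding between $H_a$ ("data came from Alice") and $H_b$ ("data came from Bob") constitute the test; $P_{correct}$ is the probability the referee decides correctly. Bob's strategy may depend on a parameter $\delta>0$; when he uses his simulator, in round $j$ he chooses an accuracy parameter $\epsilon_j$ and his cost in that round is $t_j=\mathrm{poly}(n_{a_j},1/\epsilon_j)$. For a request sequence $\alpha=(a_1,\dots,a_m)$, Alice's resource cost is $N(\alpha)=n_{a_1}+\dots+n_{a_m}$ and Bob's is $T(\alpha)=t_1+\dots+t_m$. Indistinguishability: for every $\delta>0$ and every test, $P_{correct}<\frac12+\delta$. Efficiency: there is a polynomial $f$ such that for all $\delta>0$ and all request sequences $\alpha$, $T(\alpha)\le f(N(\alpha),1/\delta)$. *)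

theory Defs
  imports "HOL-Probability.Probability"
begin

text \<open>The circuit family is represented by: n a (number of qubits of c_a),
  k a (number of output bits), P a (Born-rule output distribution of c_a).\<close>

definition circuit_family ::
  "('a::finite list \<Rightarrow> nat) \<Rightarrow> ('a list \<Rightarrow> nat) \<Rightarrow> ('a list \<Rightarrow> bool list pmf) \<Rightarrow> bool" where
  "circuit_family n k P \<longleftrightarrow>
     (\<forall>a. 1 \<le> n a \<and> k a \<le> n a \<and> set_pmf (P a) \<subseteq> {xs. length xs = k a})"

definition l1_dist :: "'b pmf \<Rightarrow> 'b pmf \<Rightarrow> real" where
  "l1_dist p q = (\<Sum>\<^sub>\<infinity> x. \<bar>pmf p x - pmf q x\<bar>)"

text \<open>Bob's classical simulation scheme: on input a circuit index a and an accuracy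
  parameter eps > 0 it outputs a sample of Sim a eps with run-time rt a eps.
  It is an eps-simulator if (choosing the accuracy parameter suitably) for every
  eps > 0 and every a it samples from a distribution in B(P a, eps) in time
  bounded by a polynomial in n a and 1/eps (uniformly in a and eps).\<close>
definition is_eps_simulator ::
  "('a list \<Rightarrow> nat) \<Rightarrow> ('a list \<Rightarrow> bool list pmf) \<Rightarrow> ('a list \<Rightarrow> real \<Rightarrow> bool list pmf)
     \<Rightarrow> ('a list \<Rightarrow> real \<Rightarrow> real) \<Rightarrow> bool" where
  "is_eps_simulator n P Sim rt \<longleftrightarrow>
     (\<exists>(c::real) (d::nat). \<forall>\<epsilon>>0. \<forall>a. \<exists>\<epsilon>'>0.
        l1_dist (Sim a \<epsilon>') (P a) \<le> \<epsilon> \<and> rt a \<epsilon>' \<le> c * (1 + real (n a) + 1 / \<epsilon>) ^ d)"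

type_synonym 'a transcript = "('a list \<times> bool list) list"

text \<open>Run of the interactive protocol: req is the referee's request rule (None = halt),
  resp j a is the candidate's response distribution in round j (counted from 1) to request a;
  the fuel bounds the number of rounds (finite protocol).\<close>
fun run_protocol ::
  "('a transcript \<Rightarrow> 'a list option) \<Rightarrow> (nat \<Rightarrow> 'a list \<Rightarrow> bool list pmf)
     \<Rightarrow> nat \<Rightarrow> nat \<Rightarrow> 'a transcript \<Rightarrow> 'a transcript pmf" where
  "run_protocol req resp 0 j tr = return_pmf tr"
| "run_protocol req resp (Suc m) j tr =
     (case req tr of
        None \<Rightarrow> return_pmf tr
      | Some a \<Rightarrow> bind_pmf (resp j a) (\<lambda>x. run_protocol req resp m (Suc j) (tr @ [(a, x)])))"

text \<open>Probability that the referee (request rule req, at most M rounds, decision rule dec,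
  dec tr = True meaning H_a) decides correctly when the candidate is Alice or Bob with
  probability 1/2 each.\<close>
definition P_correct ::
  "('a list \<Rightarrow> bool list pmf) \<Rightarrow> (nat \<Rightarrow> 'a list \<Rightarrow> bool list pmf)
     \<Rightarrow> ('a transcript \<Rightarrow> 'a list option) \<Rightarrow> ('a transcript \<Rightarrow> bool) \<Rightarrow> nat \<Rightarrow> real" where
  "P_correct P bob req dec M =
     1/2 * measure_pmf.prob (run_protocol req (\<lambda>j a. P a) M 1 []) {tr. dec tr}
   + 1/2 * measure_pmf.prob (run_protocol req bob M 1 []) {tr. \<not> dec tr}"

text \<open>Bob's strategy: for parameter delta, in round j on request a he runs his scheme with
  accuracy parameter e delta j a.\<close>
definition indistinguishable ::
  "('a list \<Rightarrow> bool list pmf) \<Rightarrow> ('a list \<Rightarrow> real \<Rightarrow> bool list pmf)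
     \<Rightarrow> (real \<Rightarrow> nat \<Rightarrow> 'a list \<Rightarrow> real) \<Rightarrow> bool" where
  "indistinguishable P Sim e \<longleftrightarrow>
     (\<forall>\<delta>>0. \<forall>req dec M. P_correct P (\<lambda>j a. Sim a (e \<delta> j a)) req dec M < 1/2 + \<delta>)"

definition efficient ::
  "('a list \<Rightarrow> nat) \<Rightarrow> ('a list \<Rightarrow> real \<Rightarrow> real) \<Rightarrow> (real \<Rightarrow> nat \<Rightarrow> 'a list \<Rightarrow> real) \<Rightarrow> bool" where
  "efficient n rt e \<longleftrightarrow>
     (\<exists>(c::real) (d::nat). \<forall>\<delta>>0. \<forall>\<alpha>::'a list list.
        (\<Sum>j<length \<alpha>. rt (\<alpha> ! j) (e \<delta> (Suc j) (\<alpha> ! j)))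
          \<le> c * (1 + real (\<Sum>i<length \<alpha>. n (\<alpha> ! i)) + 1 / \<delta>) ^ d)"

end

theory Submission
  imports Defs
begin
no_notation Infinite_Sum.abs_summable_on (infixr \<open>abs'_summable'_on\<close> 46)

lemma prob_bind: "measure_pmf.prob (bind_pmf M N) X = measure_pmf.expectation M (\<lambda>x. measure_pmf.prob (N x) X)"
proof -
  have "ennreal (measure_pmf.prob (bind_pmf M N) X) = (\<integral>\<^sup>+x. ennreal (measure_pmf.prob (N x) X) \<partial>M)"
    by (simp add: measure_pmf.emeasure_eq_measure[symmetric])
  also have "\<dots> = ennreal (measure_pmf.expectation M (\<lambda>x. measure_pmf.prob (N x) X))"
    by (rule nn_integral_eq_integral) (auto intro!: measure_pmf.integrable_const_bound[where B=1])
  finally show ?thesis by (simp add: integral_nonneg_AE)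
qed

lemma abs_diff_summ: "(\<lambda>x. \<bar>pmf p x - pmf q x\<bar>) abs_summable_on A"
proof -
  have "(\<lambda>x. pmf p x - pmf q x) abs_summable_on A" by auto
  then show ?thesis using abs_summable_on_normI by fastforce
qed

lemma l1_alt: "l1_dist p q = infsetsum (\<lambda>x. \<bar>pmf p x - pmf q x\<bar>) UNIV"
  unfolding l1_dist_def by (rule infsetsum_infsum[OF abs_diff_summ, symmetric])

lemma l1_sym: "l1_dist p q = l1_dist q p"
  unfolding l1_dist_def by (simp add: abs_minus_commute)

lemma exp_diff_le:
  assumes h0: "\<And>x. 0 \<le> h x" and h1: "\<And>x. h x \<le> 1"
  shows "measure_pmf.expectation p h - measure_pmf.expectation q h \<le> l1_dist p q"
proof -
  have sp: "(\<lambda>x. pmf p x * h x) abs_summable_on UNIV"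
    by (rule abs_summable_on_comparison_test'[OF pmf_abs_summable[of p UNIV]])
       (use h0 h1 in \<open>auto intro: mult_left_le\<close>)
  have sq: "(\<lambda>x. pmf q x * h x) abs_summable_on UNIV"
    by (rule abs_summable_on_comparison_test'[OF pmf_abs_summable[of q UNIV]])
       (use h0 h1 in \<open>auto intro: mult_left_le\<close>)
  have "measure_pmf.expectation p h - measure_pmf.expectation q h
      = infsetsum (\<lambda>x. pmf p x * h x - pmf q x * h x) UNIV"
    by (simp add: pmf_expectation_eq_infsetsum infsetsum_diff[OF sp sq])
  also have "\<dots> \<le> infsetsum (\<lambda>x. \<bar>pmf p x - pmf q x\<bar>) UNIV"
  proof (rule infsetsum_mono)
    show "(\<lambda>x. pmf p x * h x - pmf q x * h x) abs_summable_on UNIV" using sp sq by auto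
    show "(\<lambda>x. \<bar>pmf p x - pmf q x\<bar>) abs_summable_on UNIV" by (rule abs_diff_summ)
    fix x
    have "pmf p x * h x - pmf q x * h x = (pmf p x - pmf q x) * h x" by (simp add: algebra_simps)
    also have "\<dots> \<le> \<bar>(pmf p x - pmf q x) * h x\<bar>" by simp
    also have "\<dots> \<le> \<bar>pmf p x - pmf q x\<bar>" using h0[of x] h1[of x]
      by (simp add: abs_mult mult_left_le)
    finally show "pmf p x * h x - pmf q x * h x \<le> \<bar>pmf p x - pmf q x\<bar>" .
  qed
  finally show ?thesis by (simp add: l1_alt)
qed

lemma l1_eq_set: "l1_dist p q = 2 * (measure_pmf.prob p {x. pmf q x \<le> pmf p x} - measure_pmf.prob q {x. pmf q x \<le> pmf p x})"
proof -
  define S where "S = {x. pmf q x \<le> pmf p x}"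
  have "l1_dist p q = infsetsum (\<lambda>x. \<bar>pmf p x - pmf q x\<bar>) (S \<union> -S)"
    by (simp add: l1_alt)
  also have "\<dots> = infsetsum (\<lambda>x. \<bar>pmf p x - pmf q x\<bar>) S + infsetsum (\<lambda>x. \<bar>pmf p x - pmf q x\<bar>) (-S)"
    by (rule infsetsum_Un_disjoint) (auto intro: abs_diff_summ)
  also have "infsetsum (\<lambda>x. \<bar>pmf p x - pmf q x\<bar>) S = infsetsum (\<lambda>x. pmf p x - pmf q x) S"
    by (rule infsetsum_cong) (auto simp: S_def)
  also have "\<dots> = measure_pmf.prob p S - measure_pmf.prob q S"
    by (simp add: measure_pmf_conv_infsetsum infsetsum_diff[OF pmf_abs_summable pmf_abs_summable])
  also have "infsetsum (\<lambda>x. \<bar>pmf p x - pmf q x\<bar>) (-S) = infsetsum (\<lambda>x. pmf q x - pmf p x) (-S)"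
    by (rule infsetsum_cong) (auto simp: S_def)
  also have "\<dots> = measure_pmf.prob q (-S) - measure_pmf.prob p (-S)"
    by (simp add: measure_pmf_conv_infsetsum infsetsum_diff[OF pmf_abs_summable pmf_abs_summable])
  also have "\<dots> = measure_pmf.prob p S - measure_pmf.prob q S"
    using measure_pmf.prob_compl[of S p] measure_pmf.prob_compl[of S q]
    by (simp add: Compl_eq_Diff_UNIV)
  finally show ?thesis by (simp add: S_def)
qed

lemma run_bound:
  assumes l1: "\<And>j a. l1_dist (P a) (B j a) \<le> eps j" and e0: "\<And>j. 0 \<le> eps j"
  shows "measure_pmf.prob (run_protocol req (\<lambda>j a. P a) m j tr) D
       - measure_pmf.prob (run_protocol req B m j tr) D \<le> (\<Sum>i\<in>{j..<j+m}. eps i)"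
proof (induction m arbitrary: j tr)
  case 0
  then show ?case by simp
next
  case (Suc m)
  show ?case
  proof (cases "req tr")
    case None
    then show ?thesis by (simp add: sum_nonneg e0)
  next
    case (Some a)
    define fA where "fA = (\<lambda>x. measure_pmf.prob (run_protocol req (\<lambda>j a. P a) m (Suc j) (tr @ [(a, x)])) D)"
    define fB where "fB = (\<lambda>x. measure_pmf.prob (run_protocol req B m (Suc j) (tr @ [(a, x)])) D)"
    have iA: "integrable (measure_pmf M) fA" for M
      by (rule measure_pmf.integrable_const_bound[where B=1]) (auto simp: fA_def)
    have iB: "integrable (measure_pmf M) fB" for M
      by (rule measure_pmf.integrable_const_bound[where B=1]) (auto simp: fB_def)
    have lhs: "measure_pmf.prob (run_protocol req (\<lambda>j a. P a) (Suc m) j tr) D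
       - measure_pmf.prob (run_protocol req B (Suc m) j tr) D
       = (measure_pmf.expectation (P a) fA - measure_pmf.expectation (P a) fB)
         + (measure_pmf.expectation (P a) fB - measure_pmf.expectation (B j a) fB)"
      using Some by (simp add: prob_bind fA_def fB_def)
    have "measure_pmf.expectation (P a) fA - measure_pmf.expectation (P a) fB
        = measure_pmf.expectation (P a) (\<lambda>x. fA x - fB x)"
      using iA iB by simp
    also have "\<dots> \<le> measure_pmf.expectation (P a) (\<lambda>x. \<Sum>i\<in>{Suc j..<Suc j+m}. eps i)"
    proof (rule integral_mono)
      show "integrable (measure_pmf (P a)) (\<lambda>x. fA x - fB x)" using iA iB by simp
      show "integrable (measure_pmf (P a)) (\<lambda>x. \<Sum>i\<in>{Suc j..<Suc j+m}. eps i)" by simp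
      fix x show "fA x - fB x \<le> (\<Sum>i\<in>{Suc j..<Suc j+m}. eps i)"
        unfolding fA_def fB_def by (rule Suc.IH)
    qed
    also have "\<dots> = (\<Sum>i\<in>{Suc j..<Suc j+m}. eps i)" by simp
    finally have t1: "measure_pmf.expectation (P a) fA - measure_pmf.expectation (P a) fB \<le> (\<Sum>i\<in>{Suc j..<Suc j+m}. eps i)" .
    have t2: "measure_pmf.expectation (P a) fB - measure_pmf.expectation (B j a) fB \<le> eps j"
      using exp_diff_le[of fB "P a" "B j a"] l1[of a j] by (auto simp: fB_def)
    have "(\<Sum>i\<in>{j..<j+Suc m}. eps i) = eps j + (\<Sum>i\<in>{Suc j..<Suc j+m}. eps i)"
      by (simp add: sum.atLeast_Suc_lessThan)
    then show ?thesis using lhs t1 t2 by linarith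
  qed
qed

lemma tele: "(\<Sum>i\<in>{Suc 0..<Suc 0+M}. d / (real (i+1) * real (i+2))) = d/2 - d / real (M+2)"
proof (induction M)
  case 0 then show ?case by simp
next
  case (Suc M)
  have "(\<Sum>i\<in>{Suc 0..<Suc 0+Suc M}. d / (real (i+1) * real (i+2)))
      = d / (real (Suc M+1) * real (Suc M+2)) + (\<Sum>i\<in>{Suc 0..<Suc 0+M}. d / (real (i+1) * real (i+2)))"
  proof -
    have "{Suc 0..<Suc 0 + Suc M} = insert (Suc M) {Suc 0..<Suc 0+M}" by auto
    then show ?thesis by simp
  qed
  also have "\<dots> = d / (real (M+2) * real (M+3)) + (d/2 - d / real (M+2))" using Suc by simp
  also have "\<dots> = d/2 - d / real (M+3)"
  proof -
    have a: "real (M+2) > 0" "real (M+3) > 0" by auto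
    have "d / (real (M+2) * real (M+3)) = d / real (M+2) - d / real (M+3)"
      using a by (simp add: field_simps)
    then show ?thesis by simp
  qed
  finally show ?case by simp
qed


lemma one_round:
  "run_protocol (\<lambda>tr. if tr = [] then Some a else None) resp 1 1 [] = map_pmf (\<lambda>x. [(a, x)]) (resp 1 a)"
  by (simp add: map_pmf_def)

lemma converse_dir:
  assumes pos: "\<forall>\<delta>>0. \<forall>j a. e \<delta> j a > 0" and ind: "indistinguishable P Sim e" and eff: "efficient n rt e"
  shows "is_eps_simulator n P Sim rt"
proof -
  obtain c d where cd: "\<forall>\<delta>>0. \<forall>\<alpha>::'a list list.
        (\<Sum>j<length \<alpha>. rt (\<alpha> ! j) (e \<delta> (Suc j) (\<alpha> ! j)))
          \<le> c * (1 + real (\<Sum>i<length \<alpha>. n (\<alpha> ! i)) + 1 / \<delta>) ^ d"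
    using eff unfolding efficient_def by blast
  define C where "C = max c 0"
  have "\<forall>\<epsilon>>0. \<forall>a. \<exists>\<epsilon>'>0. l1_dist (Sim a \<epsilon>') (P a) \<le> \<epsilon> \<and> rt a \<epsilon>' \<le> (C * 4 ^ d) * (1 + real (n a) + 1 / \<epsilon>) ^ d"
  proof (intro allI impI)
    fix \<epsilon> :: real and a assume ep: "\<epsilon> > 0"
    define \<delta> where "\<delta> = \<epsilon> / 4"
    have dp: "\<delta> > 0" using ep by (simp add: \<delta>_def)
    define Q where "Q = Sim a (e \<delta> 1 a)"
    define S where "S = {x. pmf Q x \<le> pmf (P a) x}"
    define req :: "'a transcript \<Rightarrow> 'a list option" where "req = (\<lambda>tr. if tr = [] then Some a else None)"
    define dec :: "'a transcript \<Rightarrow> bool" where "dec = (\<lambda>tr. snd (hd tr) \<in> S)"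
    have "P_correct P (\<lambda>j a. Sim a (e \<delta> j a)) req dec 1 < 1/2 + \<delta>"
      using ind dp unfolding indistinguishable_def by blast
    moreover have "P_correct P (\<lambda>j a. Sim a (e \<delta> j a)) req dec 1
        = 1/2 * measure_pmf.prob (P a) S + 1/2 * measure_pmf.prob Q (-S)"
    proof -
      have e1: "(\<lambda>x. [(a, x)]) -` {tr. dec tr} = S" by (auto simp: dec_def)
      have e2: "(\<lambda>x. [(a, x)]) -` {tr. \<not> dec tr} = -S" by (auto simp: dec_def)
      show ?thesis unfolding P_correct_def req_def one_round
        by (simp only: measure_map_pmf e1 e2 Q_def)
    qed
    moreover have "measure_pmf.prob Q (-S) = 1 - measure_pmf.prob Q S"
      using measure_pmf.prob_compl[of S Q] by (simp add: Compl_eq_Diff_UNIV)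
    ultimately have "measure_pmf.prob (P a) S - measure_pmf.prob Q S < 2 * \<delta>" by linarith
    hence l1: "l1_dist (Sim a (e \<delta> 1 a)) (P a) \<le> \<epsilon>"
      using l1_eq_set[of "P a" Q] l1_sym[of "Sim a (e \<delta> 1 a)" "P a"]
      by (simp add: Q_def S_def \<delta>_def)
    have "rt a (e \<delta> 1 a) \<le> c * (1 + real (n a) + 1 / \<delta>) ^ d"
      using cd[rule_format, OF dp, of "[a]"] by simp
    also have "\<dots> \<le> C * (1 + real (n a) + 1 / \<delta>) ^ d"
      by (rule mult_right_mono) (use dp in \<open>auto simp: C_def\<close>)
    also have "\<dots> \<le> C * (4 * (1 + real (n a) + 1 / \<epsilon>)) ^ d"
    proof (rule mult_left_mono)
      show "(1 + real (n a) + 1 / \<delta>) ^ d \<le> (4 * (1 + real (n a) + 1 / \<epsilon>)) ^ d"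
        using ep by (intro power_mono) (auto simp: \<delta>_def)
    qed (simp add: C_def)
    also have "\<dots> = (C * 4 ^ d) * (1 + real (n a) + 1 / \<epsilon>) ^ d"
      by (simp only: power_mult_distrib mult.assoc)
    finally show "\<exists>\<epsilon>'>0. l1_dist (Sim a \<epsilon>') (P a) \<le> \<epsilon> \<and> rt a \<epsilon>' \<le> (C * 4 ^ d) * (1 + real (n a) + 1 / \<epsilon>) ^ d"
      using l1 pos dp by blast
  qed
  then show ?thesis unfolding is_eps_simulator_def by blast
qed


lemma forward_dir:
  assumes cf: "circuit_family n k P" and sim: "is_eps_simulator n P Sim rt"
  shows "\<exists>e. (\<forall>\<delta>>0. \<forall>j a. e \<delta> j a > 0) \<and> indistinguishable P Sim e \<and> efficient n rt e"
proof -
  obtain c d where cd: "\<forall>\<epsilon>>0. \<forall>a. \<exists>\<epsilon>'>0.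
        l1_dist (Sim a \<epsilon>') (P a) \<le> \<epsilon> \<and> rt a \<epsilon>' \<le> c * (1 + real (n a) + 1 / \<epsilon>) ^ d"
    using sim unfolding is_eps_simulator_def by blast
  define C where "C = max c 0"
  define eps :: "real \<Rightarrow> nat \<Rightarrow> real" where "eps = (\<lambda>\<delta> j. \<delta> / (real (j+1) * real (j+2)))"
  define e where "e = (\<lambda>\<delta> j a. if \<delta> > 0 then (SOME \<epsilon>'. \<epsilon>' > 0 \<and> l1_dist (Sim a \<epsilon>') (P a) \<le> eps \<delta> j
        \<and> rt a \<epsilon>' \<le> c * (1 + real (n a) + 1 / eps \<delta> j) ^ d) else 1)"
  have ep: "eps \<delta> j > 0" if "\<delta> > 0" for \<delta> j using that by (simp add: eps_def)
  have eprop: "e \<delta> j a > 0 \<and> l1_dist (Sim a (e \<delta> j a)) (P a) \<le> eps \<delta> j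
        \<and> rt a (e \<delta> j a) \<le> c * (1 + real (n a) + 1 / eps \<delta> j) ^ d" if "\<delta> > 0" for \<delta> j a
  proof -
    have "\<exists>\<epsilon>'>0. l1_dist (Sim a \<epsilon>') (P a) \<le> eps \<delta> j \<and> rt a \<epsilon>' \<le> c * (1 + real (n a) + 1 / eps \<delta> j) ^ d"
      using cd ep[OF that] by blast
    then show ?thesis unfolding e_def using that by (simp add: someI_ex[where P="\<lambda>\<epsilon>'. \<epsilon>' > 0 \<and> l1_dist (Sim a \<epsilon>') (P a) \<le> eps \<delta> j
        \<and> rt a \<epsilon>' \<le> c * (1 + real (n a) + 1 / eps \<delta> j) ^ d"])
  qed
  have indist: "indistinguishable P Sim e"
    unfolding indistinguishable_def
  proof (intro allI impI)
    fix \<delta> :: real and req dec M assume dp: "\<delta> > 0"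
    define pA where "pA = measure_pmf.prob (run_protocol req (\<lambda>j a. P a) M 1 []) {tr. dec tr}"
    define pB where "pB = measure_pmf.prob (run_protocol req (\<lambda>j a. Sim a (e \<delta> j a)) M 1 []) {tr. dec tr}"
    have "pA - pB \<le> (\<Sum>i\<in>{1..<1+M}. eps \<delta> i)"
      unfolding pA_def pB_def
    proof (rule run_bound)
      fix j a show "l1_dist (P a) (Sim a (e \<delta> j a)) \<le> eps \<delta> j"
        using eprop[OF dp, of j a] l1_sym by metis
    next
      fix j show "0 \<le> eps \<delta> j" using ep[OF dp] less_imp_le by blast
    qed
    also have "\<dots> = \<delta>/2 - \<delta> / real (M+2)" unfolding eps_def using tele by simp
    also have "\<dots> < \<delta>"
    proof -
      have "\<delta> / real (M+2) \<ge> 0" using dp by simp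
      then show ?thesis using dp by linarith
    qed
    finally have lt: "pA - pB < \<delta>" .
    have "measure_pmf.prob (run_protocol req (\<lambda>j a. Sim a (e \<delta> j a)) M 1 []) {tr. \<not> dec tr} = 1 - pB"
    proof -
      have "{tr. \<not> dec tr} = UNIV - {tr. dec tr}" by auto
      then show ?thesis unfolding pB_def
        using measure_pmf.prob_compl[of "{tr. dec tr}" "run_protocol req (\<lambda>j a. Sim a (e \<delta> j a)) M 1 []"]
        by simp
    qed
    then have "P_correct P (\<lambda>j a. Sim a (e \<delta> j a)) req dec M = 1/2 * pA + 1/2 * (1 - pB)"
      unfolding P_correct_def pA_def by simp
    then show "P_correct P (\<lambda>j a. Sim a (e \<delta> j a)) req dec M < 1/2 + \<delta>" using lt dp by (simp add: field_simps)
  qed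
  have effi: "efficient n rt e"
    unfolding efficient_def
  proof (intro exI allI impI)
    fix \<delta> :: real and \<alpha> :: "'a list list" assume dp: "\<delta> > 0"
    define m where "m = length \<alpha>"
    define N where "N = (\<Sum>i<m. n (\<alpha> ! i))"
    define X where "X = 1 + real N + 1 / \<delta>"
    have n1: "\<And>a. 1 \<le> n a" using cf unfolding circuit_family_def by blast
    have mN: "m \<le> N" unfolding N_def
      using sum_mono[of "{..<m}" "\<lambda>_. 1::nat" "\<lambda>i. n (\<alpha> ! i)"] n1 by simp
    have X1: "X \<ge> 1" using dp by (simp add: X_def)
    have NX: "1 + real N \<le> X" "1/\<delta> \<le> X" using dp by (auto simp: X_def)
    have tm: "rt (\<alpha> ! j) (e \<delta> (Suc j) (\<alpha> ! j)) \<le> C * 5 ^ d * X ^ (3*d)" if jm: "j < m" for j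
    proof -
      let ?a = "\<alpha> ! j"
      have naN: "n ?a \<le> N" unfolding N_def using jm by (intro member_le_sum) auto
      have "1 / eps \<delta> (Suc j) = real (j+2) * real (j+3) / \<delta>" by (simp add: eps_def)
      also have "\<dots> \<le> (2*X) * (2*X) * X"
      proof -
        have "real (j+3) \<le> 2 * X" using jm mN NX X1 by linarith
        moreover have "real (j+2) \<le> 2 * X" using jm mN NX X1 by linarith
        ultimately have "real (j+2) * real (j+3) \<le> (2*X) * (2*X)" by (intro mult_mono) auto
        then have "real (j+2) * real (j+3) * (1/\<delta>) \<le> (2*X) * (2*X) * X"
          by (rule mult_mono) (use NX X1 dp in auto)
        then show ?thesis by simp
      qed
      finally have b1: "1 / eps \<delta> (Suc j) \<le> 4 * X^3" by (simp add: power3_eq_cube)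
      have "1 + real (n ?a) + 1 / eps \<delta> (Suc j) \<le> X + 4 * X^3"
      proof -
        have "real (n ?a) \<le> real N" using naN by simp
        then show ?thesis using NX b1 by linarith
      qed
      also have "\<dots> \<le> 5 * X^3"
      proof -
        have "X \<le> X^3" using X1 by (simp add: power3_eq_cube) (smt (verit) mult_le_cancel_left1 mult_mono one_le_mult_iff)
        then show ?thesis by simp
      qed
      finally have b2: "1 + real (n ?a) + 1 / eps \<delta> (Suc j) \<le> 5 * X^3" .
      have "rt ?a (e \<delta> (Suc j) ?a) \<le> c * (1 + real (n ?a) + 1 / eps \<delta> (Suc j)) ^ d"
        using eprop[OF dp] by blast
      also have "\<dots> \<le> C * (1 + real (n ?a) + 1 / eps \<delta> (Suc j)) ^ d"
        by (rule mult_right_mono) (use ep[OF dp, of "Suc j"] in \<open>auto simp: C_def\<close>)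
      also have "\<dots> \<le> C * (5 * X^3) ^ d"
        by (rule mult_left_mono, rule power_mono[OF b2]) (use ep[OF dp, of "Suc j"] in \<open>auto simp: C_def\<close>)
      also have "\<dots> = C * 5 ^ d * X ^ (3*d)" by (simp add: power_mult_distrib power_mult)
      finally show ?thesis .
    qed
    have "(\<Sum>j<m. rt (\<alpha> ! j) (e \<delta> (Suc j) (\<alpha> ! j))) \<le> (\<Sum>j<m. C * 5 ^ d * X ^ (3*d))"
      by (rule sum_mono) (use tm in auto)
    also have "\<dots> = real m * (C * 5 ^ d * X ^ (3*d))" by simp
    also have "\<dots> \<le> X * (C * 5 ^ d * X ^ (3*d))"
      by (rule mult_right_mono) (use mN NX X1 in \<open>auto simp: C_def\<close>)
    also have "\<dots> = (C * 5 ^ d) * X ^ (3*d+1)" by (simp add: algebra_simps)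
    finally show "(\<Sum>j<length \<alpha>. rt (\<alpha> ! j) (e \<delta> (Suc j) (\<alpha> ! j)))
          \<le> (C * 5 ^ d) * (1 + real (\<Sum>i<length \<alpha>. n (\<alpha> ! i)) + 1 / \<delta>) ^ (3*d+1)"
      by (simp add: m_def N_def X_def)
  qed
  show ?thesis using eprop indist effi by blast
qed

theorem theorem1:
  fixes n k :: "'a::finite list \<Rightarrow> nat"
    and P :: "'a list \<Rightarrow> bool list pmf"
    and Sim :: "'a list \<Rightarrow> real \<Rightarrow> bool list pmf"
    and rt :: "'a list \<Rightarrow> real \<Rightarrow> real"
  assumes "circuit_family n k P"
  shows "is_eps_simulator n P Sim rt \<longleftrightarrow>
    (\<exists>e. (\<forall>\<delta>>0. \<forall>j a. e \<delta> j a > 0) \<and> indistinguishable P Sim e \<and> efficient n rt e)"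
  using forward_dir[OF assms] converse_dir by blast

end
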